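(* For every $\mu\in\mathbb F_q\setminus\{0\}$, the elliptic quadric $\mathcal Q_\mu$ is a $\left(\frac{q^n-1}{q-1}\right)$-ovoid of $\mathcal W_0$, i.e. every generator of $\mathcal W_0$ contains exactly $\frac{q^n-1}{q-1}$ points of $\mathcal Q_\mu$. (Note that for $\mu\neq0$ the quadric $\mathcal Q_\mu$ does not polarize to $\mathcal W_0$.)
   Context: Let $q$ be an even prime power and $n\ge 2$ an integer. Let $\mathrm{PG}(2n+1,q)$ have homogeneous coordinates $(X_1,\dots,X_{2n+2})$. Fix $\delta\in\mathbb F_q$ such that $X^2+X+\delta$ is irreducible over $\mathbb F_q$. For $\mu\in\mathbb F_q$ let $\mathcal Q_\mu$ be the quadric $X_1^2+X_1X_{2n+2}+\delta X_{2n+2}^2+\sum_{i=2}^{n+1}X_iX_{2n+3-i}+\mu(X_{2n}^2+X_{2n}X_{2n+1}+\delta X_{2n+1}^2)=0$, an elliptic quadric. Let $\mathcal W_0$ be the symplectic polar space defined by the alternating form $B_0(X,Y)=\sum_{i=1}^{2n+2}X_iY_{2n+3-i}$ (the polar space to which $\mathcal Q_0$ polarizes); its generators are the totally isotropic $n$-spaces. An $m$-ovoid of a symplectic polar space is a set of points meeting every generator in exactly $m$ points. *)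

theory Defs
  imports Main "HOL-Computational_Algebra.Polynomial"
begin

text \<open>Vectors of F^(2n+2) are functions nat => 'a supported on the coordinate
  indices {1..2n+2} (coordinates X_1,...,X_(2n+2)).\<close>

definition vecs :: "nat \<Rightarrow> (nat \<Rightarrow> 'a::field) set" where
  "vecs n = {x. \<forall>i. i \<notin> {1..2*n+2} \<longrightarrow> x i = 0}"

definition vsmult :: "'a::field \<Rightarrow> (nat \<Rightarrow> 'a) \<Rightarrow> nat \<Rightarrow> 'a" where
  "vsmult c x = (\<lambda>i. c * x i)"

definition lincomb :: "nat \<Rightarrow> (nat \<Rightarrow> 'a::field) \<Rightarrow> (nat \<Rightarrow> nat \<Rightarrow> 'a) \<Rightarrow> nat \<Rightarrow> 'a" where
  "lincomb k c b = (\<lambda>i. \<Sum>j<k. c j * b j i)"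

text \<open>W is a vector subspace of F^(2n+2) of (vector) dimension k, i.e. a projective
  (k-1)-space of PG(2n+1,q): it has a basis of k linearly independent vectors.\<close>
definition subspace_dim :: "nat \<Rightarrow> nat \<Rightarrow> (nat \<Rightarrow> 'a::field) set \<Rightarrow> bool" where
  "subspace_dim n k W \<longleftrightarrow>
     (\<exists>b. (\<forall>j<k. b j \<in> vecs n) \<and>
          (\<forall>c. lincomb k c b = (\<lambda>_. 0) \<longrightarrow> (\<forall>j<k. c j = 0)) \<and>
          W = {lincomb k c b | c. True})"

definition proj_points :: "nat \<Rightarrow> (nat \<Rightarrow> 'a::field) set set" where
  "proj_points n = {P. subspace_dim n 1 P}"

definition B0 :: "nat \<Rightarrow> (nat \<Rightarrow> 'a::field) \<Rightarrow> (nat \<Rightarrow> 'a) \<Rightarrow> 'a" where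
  "B0 n x y = (\<Sum>i=1..2*n+2. x i * y (2*n+3-i))"

definition generators_W0 :: "nat \<Rightarrow> (nat \<Rightarrow> 'a::field) set set" where
  "generators_W0 n = {W. subspace_dim n (n+1) W \<and> (\<forall>x\<in>W. \<forall>y\<in>W. B0 n x y = 0)}"

definition Qform :: "nat \<Rightarrow> 'a::field \<Rightarrow> 'a \<Rightarrow> (nat \<Rightarrow> 'a) \<Rightarrow> 'a" where
  "Qform n \<delta> \<mu> x =
     x 1 ^ 2 + x 1 * x (2*n+2) + \<delta> * x (2*n+2) ^ 2
     + (\<Sum>i=2..n+1. x i * x (2*n+3-i))
     + \<mu> * (x (2*n) ^ 2 + x (2*n) * x (2*n+1) + \<delta> * x (2*n+1) ^ 2)"

definition quadric :: "nat \<Rightarrow> 'a::field \<Rightarrow> 'a \<Rightarrow> (nat \<Rightarrow> 'a) set set" where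
  "quadric n \<delta> \<mu> = {P \<in> proj_points n. \<forall>x\<in>P. Qform n \<delta> \<mu> x = 0}"

definition m_ovoid_W0 :: "nat \<Rightarrow> nat \<Rightarrow> (nat \<Rightarrow> 'a::field) set set \<Rightarrow> bool" where
  "m_ovoid_W0 n m S \<longleftrightarrow> S \<subseteq> proj_points n \<and>
     (\<forall>W \<in> generators_W0 n. card {P \<in> S. P \<subseteq> W} = m)"

end

theory Submission
  imports Defs "HOL-Library.FuncSet"
begin

lemma aniso:
  fixes \<delta> x y :: "'a::field"
  assumes irr: "irreducible [:\<delta>,1,1:]" and eq: "x^2 + x*y + \<delta>*y^2 = 0"
  shows "x = 0 \<and> y = 0"
proof (cases "y = 0")
  case True
  then show ?thesis using eq by simp
next
  case False
  define t where "t = x / y"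
  have "x = t * y" using False by (simp add: t_def)
  with eq have "y^2 * (t^2 + t + \<delta>) = 0" by (simp add: algebra_simps power2_eq_square)
  with False have "t^2 + t + \<delta> = 0" by simp
  hence "poly [:\<delta>,1,1:] t = 0" by (simp add: algebra_simps power2_eq_square)
  hence "[:-t,1:] dvd [:\<delta>,1,1:]" by (simp only: poly_eq_0_iff_dvd)
  then obtain r where r: "[:\<delta>,1,1:] = [:-t,1:] * r" by (auto elim: dvdE)
  from irr r have "is_unit [:-t,1:] \<or> is_unit r" by (auto simp: irreducible_def)
  moreover have "\<not> is_unit [:-t,1:]" by (auto simp: is_unit_poly_iff)
  moreover have "\<not> is_unit r"
  proof
    assume "is_unit r"
    then obtain c where c: "r = [:c:]" "c \<noteq> 0" by (metis is_unit_poly_iff dvd_0_left_iff zero_neq_one)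
    have "degree [:\<delta>,1,1::'a:] = 2" by simp
    moreover have "degree ([:-t,1:] * r) = 1" using c by (simp add: degree_mult_eq)
    ultimately show False using r by simp
  qed
  ultimately show ?thesis by blast
qed

lemma char2: "CHAR('a::field) = 2 \<Longrightarrow> (2::'a) = 0"
  using of_nat_CHAR[where 'a='a] by simp


definition suppJ :: "nat \<Rightarrow> nat set \<Rightarrow> nat set" where
  "suppJ n J = {1, 2*n+2} \<union> J \<union> (\<lambda>i. 2*n+3-i) ` J"
definition suppd :: "nat \<Rightarrow> nat set \<Rightarrow> (nat \<Rightarrow> 'a::field) \<Rightarrow> bool" where
  "suppd n J x \<longleftrightarrow> (\<forall>i. i \<notin> suppJ n J \<longrightarrow> x i = 0)"
definition Qj :: "nat \<Rightarrow> 'a::field \<Rightarrow> nat set \<Rightarrow> (nat \<Rightarrow> 'a) \<Rightarrow> 'a" where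
  "Qj n \<delta> J x = x 1^2 + x 1 * x (2*n+2) + \<delta> * x (2*n+2)^2 + (\<Sum>i\<in>J. x i * x (2*n+3-i))"
definition Bj :: "nat \<Rightarrow> nat set \<Rightarrow> (nat \<Rightarrow> 'a::field) \<Rightarrow> (nat \<Rightarrow> 'a) \<Rightarrow> 'a" where
  "Bj n J x y = x 1 * y (2*n+2) + x (2*n+2) * y 1 + (\<Sum>i\<in>J. x i * y (2*n+3-i) + x (2*n+3-i) * y i)"
definition subsp :: "(nat \<Rightarrow> 'a::field) set \<Rightarrow> bool" where
  "subsp S \<longleftrightarrow> (\<lambda>_. 0) \<in> S \<and> (\<forall>x\<in>S. \<forall>y\<in>S. (\<lambda>i. x i + y i) \<in> S) \<and> (\<forall>c. \<forall>x\<in>S. (\<lambda>i. c * x i) \<in> S)"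

lemma polar:
  fixes x y :: "nat \<Rightarrow> 'a::field"
  assumes two: "(2::'a) = 0"
  shows "Qj n \<delta> J (\<lambda>i. x i + y i) = Qj n \<delta> J x + Qj n \<delta> J y + Bj n J x y"
proof -
  have s: "(\<Sum>i\<in>J. (x i + y i) * (x (2*n+3-i) + y (2*n+3-i))) =
     (\<Sum>i\<in>J. x i * x (2*n+3-i)) + (\<Sum>i\<in>J. y i * y (2*n+3-i)) + (\<Sum>i\<in>J. x i * y (2*n+3-i) + x (2*n+3-i) * y i)"
    unfolding sum.distrib[symmetric] by (rule sum.cong) (simp_all add: algebra_simps)
  have "Qj n \<delta> J (\<lambda>i. x i + y i) = Qj n \<delta> J x + Qj n \<delta> J y + Bj n J x y
        + 2 * (x 1 * y 1 + \<delta> * x (2*n+2) * y (2*n+2))"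
    unfolding Qj_def Bj_def s by (simp add: power2_eq_square algebra_simps)
  then show ?thesis using two by simp
qed

lemma hom:
  fixes x :: "nat \<Rightarrow> 'a::field"
  shows "Qj n \<delta> J (\<lambda>i. c * x i) = c^2 * Qj n \<delta> J x"
  unfolding Qj_def by (simp add: sum_distrib_left power2_eq_square algebra_simps)

lemma Bj_ea:
  fixes x :: "nat \<Rightarrow> 'a::field"
  assumes "a \<in> J" "J \<subseteq> {2..n+1}"
  shows "Bj n J (\<lambda>i. if i = a then 1 else 0) x = x (2*n+3-a)"
proof -
  have a: "2 \<le> a" "a \<le> n+1" using assms by auto
  have "(\<Sum>i\<in>J. (if i = a then 1 else 0) * x (2*n+3-i) + (if 2*n+3-i = a then 1 else 0) * x i)
       = (\<Sum>i\<in>J. (if i = a then x (2*n+3-a) else 0))"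
  proof (rule sum.cong)
    fix i assume "i \<in> J"
    then have "i \<le> n+1" using assms by auto
    then show "(if i = a then 1 else 0) * x (2*n+3-i) + (if 2*n+3-i = a then 1 else 0) * x i
       = (if i = a then x (2*n+3-a) else (0::'a))" using a by auto
  qed simp
  also have "\<dots> = x (2*n+3-a)" using assms(1) finite_subset[OF assms(2)] by simp
  finally show ?thesis unfolding Bj_def using a by simp
qed

lemma Qrem:
  fixes x :: "nat \<Rightarrow> 'a::field"
  assumes "a \<in> J" "J \<subseteq> {2..n+1}" "x (2*n+3-a) = 0"
  shows "Qj n \<delta> (J-{a}) (x(a:=0)) = Qj n \<delta> J x"
proof -
  have a: "2 \<le> a" "a \<le> n+1" using assms by auto
  have fin: "finite J" using finite_subset[OF assms(2)] by simp
  have "(\<Sum>i\<in>J. x i * x (2*n+3-i)) = x a * x (2*n+3-a) + (\<Sum>i\<in>J-{a}. x i * x (2*n+3-i))"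
    using sum.remove[OF fin assms(1)] by simp
  also have "(\<Sum>i\<in>J-{a}. x i * x (2*n+3-i)) = (\<Sum>i\<in>J-{a}. (x(a:=0)) i * (x(a:=0)) (2*n+3-i))"
  proof (rule sum.cong)
    fix i assume "i \<in> J-{a}"
    then have "i \<le> n+1" "i \<noteq> a" using assms by auto
    then show "x i * x (2*n+3-i) = (x(a:=0)) i * (x(a:=0)) (2*n+3-i)" using a by auto
  qed simp
  finally show ?thesis unfolding Qj_def using a assms(3) by simp
qed

lemma Brem:
  fixes x y :: "nat \<Rightarrow> 'a::field"
  assumes "a \<in> J" "J \<subseteq> {2..n+1}" "x (2*n+3-a) = 0" "y (2*n+3-a) = 0"
  shows "Bj n (J-{a}) (x(a:=0)) (y(a:=0)) = Bj n J x y"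
proof -
  have a: "2 \<le> a" "a \<le> n+1" using assms by auto
  have fin: "finite J" using finite_subset[OF assms(2)] by simp
  have "(\<Sum>i\<in>J. x i * y (2*n+3-i) + x (2*n+3-i) * y i) = (x a * y (2*n+3-a) + x (2*n+3-a) * y a)
       + (\<Sum>i\<in>J-{a}. x i * y (2*n+3-i) + x (2*n+3-i) * y i)"
    using sum.remove[OF fin assms(1)] by simp
  also have "(\<Sum>i\<in>J-{a}. x i * y (2*n+3-i) + x (2*n+3-i) * y i)
     = (\<Sum>i\<in>J-{a}. (x(a:=0)) i * (y(a:=0)) (2*n+3-i) + (x(a:=0)) (2*n+3-i) * (y(a:=0)) i)"
  proof (rule sum.cong)
    fix i assume "i \<in> J-{a}"
    then have "i \<le> n+1" "i \<noteq> a" using assms by auto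
    then show "x i * y (2*n+3-i) + x (2*n+3-i) * y i
        = (x(a:=0)) i * (y(a:=0)) (2*n+3-i) + (x(a:=0)) (2*n+3-i) * (y(a:=0)) i" using a by auto
  qed simp
  finally show ?thesis unfolding Bj_def using a assms(3,4) by simp
qed


lemma card_ge1: "1 \<le> card (UNIV::'a::{field,finite} set)"
  by (simp add: Suc_leI finite_UNIV_card_ge_0)

lemma Red:
  fixes S :: "(nat \<Rightarrow> 'a::{field,finite}) set"
  assumes aJ: "a \<in> J" "J \<subseteq> {2..n+1}" and fin: "finite S" and sub: "subsp S"
   and sup: "\<forall>x\<in>S. suppd n J x" and iso: "\<forall>x\<in>S. \<forall>y\<in>S. Bj n J x y = 0"
  defines "S2 \<equiv> (\<lambda>x. x(a:=0)) ` {x\<in>S. x (2*n+3-a) = 0}"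
  shows "finite S2 \<and> subsp S2 \<and> (\<forall>y\<in>S2. suppd n (J-{a}) y) \<and> (\<forall>y\<in>S2. \<forall>z\<in>S2. Bj n (J-{a}) y z = 0)
     \<and> (\<forall>y\<in>S2. \<exists>x\<in>S. x (2*n+3-a) = 0 \<and> y = x(a:=0)) \<and> card S \<le> card (UNIV::'a set) * card S2"
proof -
  define b where "b = 2*n+3-a"
  define S1 where "S1 = {x\<in>S. x b = 0}"
  have S2: "S2 = (\<lambda>x. x(a:=0)) ` S1" unfolding S2_def S1_def b_def by simp
  have a: "2 \<le> a" "a \<le> n+1" using aJ by auto
  have finS1: "finite S1" using fin unfolding S1_def by simp
  have f1: "finite S2" using finS1 S2 by simp
  have s0: "(\<lambda>_. 0) \<in> S" and sadd: "\<And>x y. x \<in> S \<Longrightarrow> y \<in> S \<Longrightarrow> (\<lambda>i. x i + y i) \<in> S"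
    and smul: "\<And>c x. x \<in> S \<Longrightarrow> (\<lambda>i. c * x i) \<in> S" using sub unfolding subsp_def by auto
  have f2: "subsp S2" unfolding subsp_def S2
  proof (intro conjI ballI allI)
    show "(\<lambda>_. 0) \<in> (\<lambda>x. x(a:=0)) ` S1"
      using s0 by (intro image_eqI[where x="\<lambda>_. 0"]) (auto simp: S1_def)
  next
    fix u v assume "u \<in> (\<lambda>x. x(a:=0)) ` S1" "v \<in> (\<lambda>x. x(a:=0)) ` S1"
    then obtain x y where "x \<in> S1" "y \<in> S1" "u = x(a:=0)" "v = y(a:=0)" by auto
    then show "(\<lambda>i. u i + v i) \<in> (\<lambda>x. x(a:=0)) ` S1"
      using sadd by (intro image_eqI[where x="\<lambda>i. x i + y i"]) (auto simp: S1_def fun_eq_iff)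
  next
    fix c u assume "u \<in> (\<lambda>x. x(a:=0)) ` S1"
    then obtain x where "x \<in> S1" "u = x(a:=0)" by auto
    then show "(\<lambda>i. c * u i) \<in> (\<lambda>x. x(a:=0)) ` S1"
      using smul by (intro image_eqI[where x="\<lambda>i. c * x i"]) (auto simp: S1_def fun_eq_iff)
  qed
  have f3: "\<forall>y\<in>S2. suppd n (J-{a}) y"
  proof
    fix y assume "y \<in> S2"
    then obtain x where x: "x \<in> S1" "y = x(a:=0)" using S2 by auto
    show "suppd n (J-{a}) y" unfolding suppd_def
    proof (intro allI impI)
      fix i assume i: "i \<notin> suppJ n (J-{a})"
      show "y i = 0"
      proof (cases "i = a \<or> i = b")
        case True then show ?thesis using x a by (auto simp: S1_def b_def)
      next
        case False
        then have "i \<notin> suppJ n J" using i unfolding suppJ_def b_def by auto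
        then show ?thesis using x sup False by (auto simp: S1_def suppd_def)
      qed
    qed
  qed
  have f4: "\<forall>y\<in>S2. \<forall>z\<in>S2. Bj n (J-{a}) y z = 0"
  proof (intro ballI)
    fix y z assume "y \<in> S2" "z \<in> S2"
    then obtain x x' where "x \<in> S1" "y = x(a:=0)" "x' \<in> S1" "z = x'(a:=0)" using S2 by auto
    then show "Bj n (J-{a}) y z = 0" using Brem[OF aJ, of x x'] iso by (auto simp: S1_def b_def)
  qed
  have f5: "\<forall>y\<in>S2. \<exists>x\<in>S. x (2*n+3-a) = 0 \<and> y = x(a:=0)" using S2 by (auto simp: S1_def b_def)
  define e :: "nat \<Rightarrow> 'a" where "e = (\<lambda>i. if i = a then 1 else 0)"
  have f6: "card S \<le> card (UNIV::'a set) * card S2"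
  proof (cases "e \<in> S")
    case True
    have xb: "x b = 0" if "x \<in> S" for x
    proof -
      have "Bj n J e x = 0" using iso True that by blast
      then show ?thesis using Bj_ea[OF aJ, of x] unfolding e_def b_def by simp
    qed
    have sub1: "S \<subseteq> (\<lambda>(y,t). y(a:=t)) ` (S2 \<times> UNIV)"
    proof
      fix x assume x: "x \<in> S"
      have "x(a:=0) \<in> S2" unfolding S2 S1_def using x xb by blast
      moreover have "x = (\<lambda>(y,t). y(a:=t)) (x(a:=0), x a)" by simp
      ultimately show "x \<in> (\<lambda>(y,t). y(a:=t)) ` (S2 \<times> UNIV)" by (intro rev_image_eqI[of "(x(a:=0), x a)"]) auto
    qed
    have "card S \<le> card ((\<lambda>(y,t). y(a:=t)) ` (S2 \<times> (UNIV::'a set)))"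
      by (rule card_mono[OF _ sub1]) (use f1 in simp)
    also have "\<dots> \<le> card (S2 \<times> (UNIV::'a set))" by (rule card_image_le) (use f1 in simp)
    finally show ?thesis by (simp add: card_cartesian_product mult.commute)
  next
    case False
    have inj: "inj_on (\<lambda>x. x(a:=0)) S1"
    proof (rule inj_onI)
      fix x x' assume xs: "x \<in> S1" "x' \<in> S1" "x(a:=0) = x'(a:=0)"
      then have eq: "\<And>i. i \<noteq> a \<Longrightarrow> x i = x' i" by (metis fun_upd_other)
      show "x = x'"
      proof (cases "x a = x' a")
        case True then show ?thesis using eq by (metis ext)
      next
        case ne: False
        define d where "d = (\<lambda>i. x i + (-1) * x' i)"
        have xS: "x \<in> S" "x' \<in> S" using xs unfolding S1_def by auto
        have m: "(\<lambda>i. (-1::'a) * x' i) \<in> S" by (rule smul[OF xS(2)])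
        have "d \<in> S" unfolding d_def by (rule sadd[OF xS(1) m])
        then have "(\<lambda>i. (1 / (x a - x' a)) * d i) \<in> S" by (rule smul)
        moreover have "(\<lambda>i. (1 / (x a - x' a)) * d i) = e"
          using ne eq by (auto simp: fun_eq_iff d_def e_def)
        ultimately show ?thesis using False by simp
      qed
    qed
    then have c: "card S2 = card S1" unfolding S2 by (rule card_image)
    have "card S \<le> card (UNIV::'a set) * card S1"
    proof (cases "\<exists>z\<in>S. z b \<noteq> 0")
      case True
      then obtain z where z: "z \<in> S" "z b \<noteq> 0" by auto
      have "S \<subseteq> (\<lambda>(y,t). (\<lambda>i. y i + t * z i)) ` (S1 \<times> UNIV)"
      proof
        fix x assume x: "x \<in> S"
        define t where "t = x b / z b"
        define y where "y = (\<lambda>i. x i + (-t) * z i)"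
        have m: "(\<lambda>i. (-t) * z i) \<in> S" by (rule smul[OF z(1)])
        have "y \<in> S" unfolding y_def by (rule sadd[OF x m])
        moreover have "y b = 0" using z(2) unfolding y_def t_def by simp
        ultimately have "y \<in> S1" unfolding S1_def by simp
        moreover have "x = (\<lambda>i. y i + t * z i)" unfolding y_def by auto
        ultimately show "x \<in> (\<lambda>(y,t). (\<lambda>i. y i + t * z i)) ` (S1 \<times> UNIV)"
          by (intro rev_image_eqI[of "(y,t)"]) auto
      qed
      then have sub2: "S \<subseteq> (\<lambda>(y,t). (\<lambda>i. y i + t * z i)) ` (S1 \<times> (UNIV::'a set))" .
      have "card S \<le> card ((\<lambda>(y,t). (\<lambda>i. y i + t * z i)) ` (S1 \<times> (UNIV::'a set)))"
        by (rule card_mono[OF _ sub2]) (use finS1 in simp)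
      also have "\<dots> \<le> card (S1 \<times> (UNIV::'a set))" by (rule card_image_le) (use finS1 in simp)
      finally show ?thesis by (simp add: card_cartesian_product mult.commute)
    next
      case False
      then have "S1 = S" unfolding S1_def by auto
      then show ?thesis using card_ge1[where 'a='a] by simp
    qed
    then show ?thesis using c by simp
  qed
  show ?thesis using f1 f2 f3 f4 f5 f6 by blast
qed


lemma EB:
  fixes \<delta> :: "'a::{field,finite}"
  assumes irr: "irreducible [:\<delta>,1,1:]" and two: "(2::'a)=0" and fJ: "finite J"
  shows "J \<subseteq> {2..n+1} \<Longrightarrow> finite S \<Longrightarrow> subsp S \<Longrightarrow> (\<forall>x\<in>S. suppd n J x)
     \<Longrightarrow> (\<forall>x\<in>S. Qj n \<delta> J x = 0) \<Longrightarrow> card S \<le> card (UNIV::'a set) ^ card J"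
  using fJ
proof (induction J arbitrary: S rule: finite_induct)
  case empty
  have "S \<subseteq> {\<lambda>_. 0}"
  proof
    fix x assume x: "x \<in> S"
    then have "x 1^2 + x 1 * x (2*n+2) + \<delta> * x (2*n+2)^2 = 0" using empty by (simp add: Qj_def)
    then have z: "x 1 = 0" "x (2*n+2) = 0" using aniso[OF irr] by blast+
    have "\<forall>i. x i = 0"
    proof
      fix i show "x i = 0"
        using z x empty(4) by (cases "i = 1 \<or> i = 2*n+2") (auto simp: suppd_def suppJ_def)
    qed
    then show "x \<in> {\<lambda>_. 0}" by auto
  qed
  then have "card S \<le> card {\<lambda>_::nat. (0::'a)}" by (intro card_mono) simp_all
  then show ?case by simp
next
  case (insert a J)
  have sub: "subsp S" using insert by simp
  have aJ: "a \<in> insert a J" "insert a J \<subseteq> {2..n+1}" using insert by auto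
  have iso: "\<forall>x\<in>S. \<forall>y\<in>S. Bj n (insert a J) x y = 0"
  proof (intro ballI)
    fix x y assume "x \<in> S" "y \<in> S"
    moreover have "(\<lambda>i. x i + y i) \<in> S" using sub \<open>x \<in> S\<close> \<open>y \<in> S\<close> unfolding subsp_def by blast
    ultimately show "Bj n (insert a J) x y = 0" using insert.prems(5) polar[OF two, of n \<delta> "insert a J" x y] by simp
  qed
  define S2 where "S2 = (\<lambda>x. x(a:=0)) ` {x\<in>S. x (2*n+3-a) = 0}"
  have R: "finite S2 \<and> subsp S2 \<and> (\<forall>y\<in>S2. suppd n (insert a J - {a}) y) \<and> (\<forall>y\<in>S2. \<forall>z\<in>S2. Bj n (insert a J - {a}) y z = 0)
     \<and> (\<forall>y\<in>S2. \<exists>x\<in>S. x (2*n+3-a) = 0 \<and> y = x(a:=0)) \<and> card S \<le> card (UNIV::'a set) * card S2"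
    unfolding S2_def by (rule Red[OF aJ]) (use insert iso in auto)
  have J: "insert a J - {a} = J" using insert by auto
  have Q2: "\<forall>y\<in>S2. Qj n \<delta> J y = 0"
  proof
    fix y assume "y \<in> S2"
    then obtain x where x: "x \<in> S" "x (2*n+3-a) = 0" "y = x(a:=0)" using R by blast
    show "Qj n \<delta> J y = 0" using Qrem[of a "insert a J" n x \<delta>, OF aJ x(2)] x insert.prems(5) J by simp
  qed
  have "card S2 \<le> card (UNIV::'a set) ^ card J"
    using insert.IH[of S2] R J Q2 insert(4) by auto
  then have "card S \<le> card (UNIV::'a set) * card (UNIV::'a set) ^ card J"
    using R by (meson mult_le_mono2 order_trans)
  then show ?case using insert by simp
qed


lemma gen_props:
  assumes "subspace_dim n k (W :: (nat \<Rightarrow> 'a::{field,finite}) set)"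
  shows "finite W \<and> subsp W \<and> card W = card (UNIV::'a set) ^ k \<and> W \<subseteq> vecs n"
proof -
  obtain b where bv: "\<forall>j<k. b j \<in> vecs n" and ind: "\<forall>c. lincomb k c b = (\<lambda>_. 0) \<longrightarrow> (\<forall>j<k. c j = 0)"
    and W: "W = {lincomb k c b | c. True}" using assms unfolding subspace_dim_def by blast
  define L where "L = (\<lambda>c. lincomb k c b)"
  define A where "A = (PiE {..<k} (\<lambda>_. UNIV::'a set))"
  have res: "lincomb k c b = lincomb k (restrict c {..<k}) b" for c
    unfolding lincomb_def by (auto intro!: sum.cong)
  have WA: "W = L ` A"
  proof
    show "W \<subseteq> L ` A"
    proof
      fix x assume "x \<in> W"
      then obtain c where "x = lincomb k c b" using W by auto
      then have "x = L (restrict c {..<k})" using res unfolding L_def by simp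
      moreover have "restrict c {..<k} \<in> A" unfolding A_def by simp
      ultimately show "x \<in> L ` A" by blast
    qed
  qed (auto simp: W L_def)
  have inj: "inj_on L A"
  proof (rule inj_onI)
    fix c c' assume cc: "c \<in> A" "c' \<in> A" "L c = L c'"
    have "lincomb k (\<lambda>j. c j - c' j) b = (\<lambda>_. 0)"
      using cc(3) unfolding L_def lincomb_def fun_eq_iff
      by (simp add: algebra_simps sum_subtractf)
    then have "\<forall>j<k. c j = c' j" using ind by fastforce
    show "c = c'"
    proof
      fix j show "c j = c' j"
        using cc(1,2) \<open>\<forall>j<k. c j = c' j\<close> unfolding A_def
        by (cases "j < k") (auto simp: PiE_def extensional_def)
    qed
  qed
  have cA: "card A = card (UNIV::'a set) ^ k" unfolding A_def by (simp add: card_PiE)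
  have fA: "finite A" unfolding A_def by (simp add: finite_PiE)
  have "card W = card (UNIV::'a set) ^ k" using WA inj cA by (simp add: card_image)
  moreover have "finite W" using WA fA by simp
  moreover have "subsp W"
    unfolding subsp_def W
  proof (intro conjI ballI allI)
    show "(\<lambda>_. 0) \<in> {lincomb k c b |c. True}"
      by (rule CollectI, rule exI[of _ "\<lambda>_. 0"]) (simp add: lincomb_def fun_eq_iff)
  next
    fix x y assume "x \<in> {lincomb k c b |c. True}" "y \<in> {lincomb k c b |c. True}"
    then obtain c c' where "x = lincomb k c b" "y = lincomb k c' b" by auto
    then show "(\<lambda>i. x i + y i) \<in> {lincomb k c b |c. True}"
      by (intro CollectI exI[of _ "\<lambda>j. c j + c' j"]) (simp add: lincomb_def fun_eq_iff sum.distrib algebra_simps)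
  next
    fix d x assume "x \<in> {lincomb k c b |c. True}"
    then obtain c where "x = lincomb k c b" by auto
    then show "(\<lambda>i. d * x i) \<in> {lincomb k c b |c. True}"
      by (intro CollectI exI[of _ "\<lambda>j. d * c j"]) (simp add: lincomb_def fun_eq_iff sum_distrib_left algebra_simps)
  qed
  moreover have "W \<subseteq> vecs n"
    using bv unfolding W vecs_def lincomb_def by auto
  ultimately show ?thesis by blast
qed

lemma img_refl: "(\<lambda>i. 2*n+3-i) ` {2..n+1} = {n+2..2*(n::nat)+1}"
proof
  show "{n+2..2*n+1} \<subseteq> (\<lambda>i. 2*n+3-i) ` {2..n+1}"
  proof
    fix j assume j: "j \<in> {n+2..2*n+1}"
    then have "j = (\<lambda>i. 2*n+3-i) (2*n+3-j)" "2*n+3-j \<in> {2..n+1}" by auto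
    then show "j \<in> (\<lambda>i. 2*n+3-i) ` {2..n+1}" by blast
  qed
qed auto

lemma suppJ0: "suppJ n {2..n+1} = {1..2*(n::nat)+2}"
  unfolding suppJ_def img_refl by auto

lemma B0_Bj: "B0 n x y = Bj n {2..n+1} x y"
proof -
  have dec: "{1..2*n+2} = insert 1 (insert (2*n+2) ({2..n+1} \<union> {n+2..2*n+1}))" by auto
  have inj: "inj_on (\<lambda>i. 2*n+3-i) {2..n+1}" by (auto simp: inj_on_def)
  have r: "(\<Sum>i\<in>{n+2..2*n+1}. x i * y (2*n+3-i)) = (\<Sum>i\<in>{2..n+1}. x (2*n+3-i) * y i)"
    unfolding img_refl[symmetric] sum.reindex[OF inj] by (rule sum.cong) auto
  have "B0 n x y = x 1 * y (2*n+2) + x (2*n+2) * y 1 + (\<Sum>i\<in>{2..n+1}. x i * y (2*n+3-i))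
        + (\<Sum>i\<in>{n+2..2*n+1}. x i * y (2*n+3-i))"
    unfolding B0_def dec by (simp add: sum.union_disjoint algebra_simps)
  then show ?thesis unfolding r Bj_def by (simp add: sum.distrib algebra_simps)
qed

lemma Qform_split: "Qform n \<delta> \<mu> x = Qj n \<delta> {2..n+1} x + \<mu> * (x (2*n) ^ 2 + x (2*n) * x (2*n+1) + \<delta> * x (2*n+1) ^ 2)"
  unfolding Qform_def Qj_def by simp

lemma two_add: "(2::'a::field) = 0 \<Longrightarrow> t + t = (0::'a)"
proof -
  assume two: "(2::'a) = 0"
  have "t + t = 2 * t" by simp
  then show ?thesis using two by simp
qed

lemma sq_surj:
  assumes two: "(2::'a::{field,finite}) = 0"
  shows "\<exists>s::'a. s^2 = a"
proof -
  have "inj (\<lambda>s::'a. s^2)"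
  proof (rule injI)
    fix s t :: 'a assume st: "s^2 = t^2"
    have "(s + t)^2 = s^2 + t^2 + 2*s*t" by (simp add: power2_eq_square algebra_simps)
    also have "\<dots> = t^2 + t^2" using two st by simp
    also have "\<dots> = 0" by (rule two_add[OF two])
    finally have "s + t = 0" by simp
    then have "s = -t" by (simp add: eq_neg_iff_add_eq_0)
    moreover have "-t = t" using two_add[OF two, of t] by (rule add.inverse_unique)
    ultimately show "s = t" by simp
  qed
  then have "surj (\<lambda>s::'a. s^2)" by (simp add: finite_UNIV_inj_surj)
  then show ?thesis by (metis surjD)
qed


lemma proj_points_iff:
  "P \<in> proj_points n \<longleftrightarrow> (\<exists>v::nat \<Rightarrow> 'a::field. v \<in> vecs n \<and> v \<noteq> (\<lambda>_. 0) \<and> P = range (\<lambda>c. (\<lambda>i. c * v i)))"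
proof
  assume "P \<in> proj_points n"
  then obtain b where b: "\<forall>j<1. b j \<in> vecs n" "\<forall>c. lincomb 1 c b = (\<lambda>_. 0) \<longrightarrow> (\<forall>j<1. c j = (0::'a))"
    "P = {lincomb 1 c b | c. True}" unfolding proj_points_def subspace_dim_def by blast
  have lc: "lincomb 1 c b = (\<lambda>i. c 0 * b 0 i)" for c unfolding lincomb_def by simp
  have "b 0 \<noteq> (\<lambda>_. 0)"
  proof
    assume "b 0 = (\<lambda>_. 0)"
    then have "lincomb 1 (\<lambda>_. 1) b = (\<lambda>_. 0)" unfolding lc by simp
    then show False using b(2) by fastforce
  qed
  moreover have "P = range (\<lambda>c. (\<lambda>i. c * b 0 i))"
  proof
    show "P \<subseteq> range (\<lambda>c. (\<lambda>i. c * b 0 i))" unfolding b(3) lc by auto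
    show "range (\<lambda>c. (\<lambda>i. c * b 0 i)) \<subseteq> P"
    proof
      fix x assume "x \<in> range (\<lambda>c. (\<lambda>i. c * b 0 i))"
      then obtain d where "x = (\<lambda>i. d * b 0 i)" by auto
      then have "x = lincomb 1 (\<lambda>_. d) b" unfolding lc by simp
      then show "x \<in> P" unfolding b(3) by blast
    qed
  qed
  ultimately show "\<exists>v. v \<in> vecs n \<and> v \<noteq> (\<lambda>_. 0) \<and> P = range (\<lambda>c. (\<lambda>i. c * v i))" using b(1) by auto
next
  assume "\<exists>v. v \<in> vecs n \<and> v \<noteq> (\<lambda>_. 0) \<and> P = range (\<lambda>c. (\<lambda>i. c * v i))"
  then obtain v where v: "v \<in> vecs n" "v \<noteq> (\<lambda>_. 0)" "P = range (\<lambda>c. (\<lambda>i. c * v i))" by blast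
  then obtain i0 where i0: "v i0 \<noteq> 0" by auto
  define b where "b = (\<lambda>j::nat. v)"
  have lc: "lincomb 1 c b = (\<lambda>i. c 0 * v i)" for c unfolding lincomb_def b_def by simp
  have "subspace_dim n 1 P" unfolding subspace_dim_def
  proof (rule exI[of _ b], intro conjI)
    show "\<forall>j<1. b j \<in> vecs n" using v unfolding b_def by simp
  next
    show "\<forall>c. lincomb 1 c b = (\<lambda>_. 0) \<longrightarrow> (\<forall>j<1. c j = 0)"
    proof (intro allI impI)
      fix c j assume e: "lincomb 1 c b = (\<lambda>_. 0)" and j: "j < (1::nat)"
      have "c 0 * v i0 = 0" using fun_cong[OF e, of i0] unfolding lc by simp
      then show "c j = 0" using i0 j by simp
    qed
  next
    show "P = {lincomb 1 c b |c. True}"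
    proof
      show "P \<subseteq> {lincomb 1 c b |c. True}"
      proof
        fix x assume "x \<in> P"
        then obtain d where "x = (\<lambda>i. d * v i)" using v by auto
        then have "x = lincomb 1 (\<lambda>_. d) b" unfolding lc by simp
        then show "x \<in> {lincomb 1 c b |c. True}" by blast
      qed
      show "{lincomb 1 c b |c. True} \<subseteq> P" unfolding lc v(3) by auto
    qed
  qed
  then show "P \<in> proj_points n" unfolding proj_points_def by simp
qed

lemma Qform_hom: "Qform n \<delta> \<mu> (\<lambda>i. c * x i) = c^2 * Qform n \<delta> \<mu> (x :: nat \<Rightarrow> 'a::field)"
  unfolding Qform_split hom by (simp add: power2_eq_square algebra_simps)

lemma line_eq:
  fixes u v :: "nat \<Rightarrow> 'a::field"
  assumes "u \<in> range (\<lambda>c. (\<lambda>i. c * v i))" "u \<noteq> (\<lambda>_. 0)"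
  shows "range (\<lambda>c. (\<lambda>i. c * u i)) = range (\<lambda>c. (\<lambda>i. c * v i))"
proof -
  obtain d where d: "u = (\<lambda>i. d * v i)" using assms by auto
  then have "d \<noteq> 0" using assms(2) by auto
  show ?thesis
  proof
    show "range (\<lambda>c. (\<lambda>i. c * u i)) \<subseteq> range (\<lambda>c. (\<lambda>i. c * v i))"
    proof
      fix x assume "x \<in> range (\<lambda>c. (\<lambda>i. c * u i))"
      then obtain c where "x = (\<lambda>i. c * u i)" by auto
      then have "x = (\<lambda>i. (c*d) * v i)" using d by (simp add: mult.assoc)
      then show "x \<in> range (\<lambda>c. (\<lambda>i. c * v i))" by blast
    qed
    show "range (\<lambda>c. (\<lambda>i. c * v i)) \<subseteq> range (\<lambda>c. (\<lambda>i. c * u i))"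
    proof
      fix x assume "x \<in> range (\<lambda>c. (\<lambda>i. c * v i))"
      then obtain c where "x = (\<lambda>i. c * v i)" by auto
      then have "x = (\<lambda>i. (c/d) * u i)" using d \<open>d \<noteq> 0\<close> by (simp add: fun_eq_iff)
      then show "x \<in> range (\<lambda>c. (\<lambda>i. c * u i))" by blast
    qed
  qed
qed

lemma line_card:
  fixes v :: "nat \<Rightarrow> 'a::{field,finite}"
  assumes "v \<noteq> (\<lambda>_. 0)"
  shows "card (range (\<lambda>c. (\<lambda>i. c * v i)) - {\<lambda>_. 0}) = card (UNIV::'a set) - 1"
proof -
  obtain i0 where i0: "v i0 \<noteq> 0" using assms by auto
  have inj: "inj (\<lambda>c. (\<lambda>i. c * v i))"
  proof (rule injI)
    fix c d assume e: "(\<lambda>i. c * v i) = (\<lambda>i. d * v i)"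
    have "c * v i0 = d * v i0" using fun_cong[OF e, of i0] by simp
    then show "c = d" using i0 by simp
  qed
  have "(\<lambda>_. 0) \<in> range (\<lambda>c. (\<lambda>i. c * v i))" by (rule range_eqI[of _ _ 0]) simp
  moreover have "card (range (\<lambda>c. (\<lambda>i. c * v i))) = card (UNIV::'a set)" using inj by (simp add: card_image)
  ultimately show ?thesis by (simp add: card_Diff_singleton)
qed

lemma count_points:
  fixes \<delta> \<mu> :: "'a::{field,finite}"
  assumes finW: "finite W" and subW: "subsp W" and Wv: "W \<subseteq> vecs n"
    and cZ: "card {x\<in>W. Qform n \<delta> \<mu> x = 0} = card (UNIV::'a set) ^ n"
  shows "card {P \<in> quadric n \<delta> \<mu>. P \<subseteq> W} = (card (UNIV::'a set) ^ n - 1) div (card (UNIV::'a set) - 1)"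
proof -
  define q where "q = card (UNIV::'a set)"
  define L :: "(nat \<Rightarrow> 'a) \<Rightarrow> (nat \<Rightarrow> 'a) set" where "L v = range (\<lambda>c. (\<lambda>i. c * v i))" for v
  define Z where "Z = {x\<in>W. Qform n \<delta> \<mu> x = 0}"
  define Pset where "Pset = {P \<in> quadric n \<delta> \<mu>. P \<subseteq> W}"
  have q1: "q \<ge> 1" unfolding q_def by (rule card_ge1)
  have smul: "\<And>c x. x \<in> W \<Longrightarrow> (\<lambda>i. c * x i) \<in> W" using subW unfolding subsp_def by blast
  have z0: "(\<lambda>_. 0) \<in> W" using subW unfolding subsp_def by blast
  have Pchar: "P \<in> Pset \<longleftrightarrow> (\<exists>v\<in>Z. v \<noteq> (\<lambda>_. 0) \<and> P = L v)" for P
  proof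
    assume "P \<in> Pset"
    then have P: "P \<in> proj_points n" "\<forall>x\<in>P. Qform n \<delta> \<mu> x = 0" "P \<subseteq> W"
      unfolding Pset_def quadric_def by auto
    then obtain v where v: "v \<in> vecs n" "v \<noteq> (\<lambda>_. 0)" "P = L v" unfolding proj_points_iff L_def by blast
    have "v \<in> P" unfolding v(3) L_def by (rule range_eqI[of _ _ 1]) simp
    then have "v \<in> Z" using P unfolding Z_def by auto
    then show "\<exists>v\<in>Z. v \<noteq> (\<lambda>_. 0) \<and> P = L v" using v by blast
  next
    assume "\<exists>v\<in>Z. v \<noteq> (\<lambda>_. 0) \<and> P = L v"
    then obtain v where v: "v \<in> Z" "v \<noteq> (\<lambda>_. 0)" "P = L v" by blast
    have "P \<in> proj_points n" unfolding proj_points_iff using v Wv unfolding Z_def L_def by blast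
    moreover have "\<forall>x\<in>P. Qform n \<delta> \<mu> x = 0" using v unfolding Z_def L_def by (auto simp: Qform_hom)
    moreover have "P \<subseteq> W" using v smul unfolding Z_def L_def by auto
    ultimately show "P \<in> Pset" unfolding Pset_def quadric_def by auto
  qed
  have zL: "(\<lambda>_. 0) \<in> L v" for v unfolding L_def by (rule range_eqI[of _ _ 0]) simp
  define D where "D = (\<lambda>P. P - {\<lambda>_. 0}) ` Pset"
  have finP: "finite Pset"
  proof (rule finite_subset)
    show "Pset \<subseteq> Pow W" unfolding Pset_def by auto
  qed (use finW in simp)
  have UD: "\<Union>D = Z - {\<lambda>_. 0}"
  proof
    show "\<Union>D \<subseteq> Z - {\<lambda>_. 0}"
    proof
      fix x assume "x \<in> \<Union>D"
      then obtain P where P: "P \<in> Pset" "x \<in> P" "x \<noteq> (\<lambda>_. 0)" unfolding D_def by auto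
      then obtain v where v: "v \<in> Z" "P = L v" using Pchar[of P] by blast
      then obtain c where "x = (\<lambda>i. c * v i)" using P unfolding L_def by auto
      then have "x \<in> Z" using v smul unfolding Z_def by (auto simp: Qform_hom)
      then show "x \<in> Z - {\<lambda>_. 0}" using P by simp
    qed
    show "Z - {\<lambda>_. 0} \<subseteq> \<Union>D"
    proof
      fix v assume v: "v \<in> Z - {\<lambda>_. 0}"
      then have "L v \<in> Pset" using Pchar[of "L v"] by blast
      moreover have "v \<in> L v" unfolding L_def by (rule range_eqI[of _ _ 1]) simp
      ultimately show "v \<in> \<Union>D" using v unfolding D_def by blast
    qed
  qed
  have cardD: "\<forall>c\<in>D. card c = q - 1"
  proof
    fix c assume "c \<in> D"
    then obtain P where P: "P \<in> Pset" "c = P - {\<lambda>_. 0}" unfolding D_def by auto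
    then obtain v where "v \<noteq> (\<lambda>_. 0)" "c = L v - {\<lambda>_. 0}" using Pchar[of P] by blast
    then show "card c = q - 1" unfolding L_def q_def using line_card[of v] by simp
  qed
  have disj: "\<forall>c1\<in>D. \<forall>c2\<in>D. c1 \<noteq> c2 \<longrightarrow> c1 \<inter> c2 = {}"
  proof (intro ballI impI)
    fix c1 c2 assume c: "c1 \<in> D" "c2 \<in> D" "c1 \<noteq> c2"
    obtain P1 where P1: "P1 \<in> Pset" "c1 = P1 - {\<lambda>_. 0}" using c(1) unfolding D_def by auto
    obtain v1 where p1: "c1 = L v1 - {\<lambda>_. 0}" "v1 \<noteq> (\<lambda>_. 0)"
      using P1 Pchar[of P1] by blast
    obtain P2 where P2: "P2 \<in> Pset" "c2 = P2 - {\<lambda>_. 0}" using c(2) unfolding D_def by auto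
    obtain v2 where p2: "c2 = L v2 - {\<lambda>_. 0}" "v2 \<noteq> (\<lambda>_. 0)"
      using P2 Pchar[of P2] by blast
    show "c1 \<inter> c2 = {}"
    proof (rule ccontr)
      assume "c1 \<inter> c2 \<noteq> {}"
      then obtain x where x: "x \<in> L v1" "x \<in> L v2" "x \<noteq> (\<lambda>_. 0)" using p1 p2 by auto
      have "L x = L v1" using line_eq[OF x(1)[unfolded L_def] x(3)] unfolding L_def by simp
      moreover have "L x = L v2" using line_eq[OF x(2)[unfolded L_def] x(3)] unfolding L_def by simp
      ultimately
      show False using c(3) p1 p2 by simp
    qed
  qed
  have injD: "inj_on (\<lambda>P. P - {\<lambda>_. 0}) Pset"
  proof (rule inj_onI)
    fix P P' assume PP: "P \<in> Pset" "P' \<in> Pset" "P - {\<lambda>_. 0} = P' - {\<lambda>_. 0}"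
    have "(\<lambda>_. 0) \<in> P" using PP(1) Pchar[of P] zL by blast
    moreover have "(\<lambda>_. 0) \<in> P'" using PP(2) Pchar[of P'] zL by blast
    ultimately
    show "P = P'" using PP(3) by blast
  qed
  have fUD: "finite (\<Union>D)" unfolding UD Z_def using finW by simp
  have "(q - 1) * card D = card (\<Union>D)"
    by (rule card_partition) (use finP fUD cardD disj in \<open>auto simp: D_def\<close>)
  moreover have "card D = card Pset" unfolding D_def using injD by (rule card_image)
  moreover have "card (\<Union>D) = q ^ n - 1"
  proof -
    have "(\<lambda>_. 0) \<in> Z" using z0 unfolding Z_def Qform_def by simp
    then show ?thesis unfolding UD using cZ unfolding Z_def q_def
      by (simp add: card_Diff_singleton)
  qed
  ultimately have "(q - 1) * card Pset = q ^ n - 1" by simp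
  moreover have "q - 1 > 0"
  proof -
    have "card {0::'a, 1} \<le> q" unfolding q_def by (rule card_mono) simp_all
    then show ?thesis by simp
  qed
  ultimately have "card Pset = (q ^ n - 1) div (q - 1)" by (metis nonzero_mult_div_cancel_left less_not_refl2)
  then show ?thesis unfolding Pset_def q_def .
qed


lemma count_main:
  fixes \<delta> \<mu> :: "'a::{field,finite}"
  assumes ch: "CHAR('a) = 2" and n2: "n \<ge> 2" and irr: "irreducible [:\<delta>,1,1:]" and WG: "W \<in> generators_W0 n"
  shows "card {x\<in>W. Qform n \<delta> \<mu> x = 0} = card (UNIV::'a set) ^ n \<and> finite W \<and> subsp W \<and> W \<subseteq> vecs n"
proof -
  define q where "q = card (UNIV::'a set)"
  have two: "(2::'a) = 0" by (rule char2[OF ch])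
  have q2: "q \<ge> 2"
  proof -
    have "card {0::'a, 1} \<le> q" unfolding q_def by (rule card_mono) simp_all
    then show ?thesis by simp
  qed
  have sd: "subspace_dim n (n+1) W" and isoB: "\<forall>x\<in>W. \<forall>y\<in>W. B0 n x y = 0"
    using WG unfolding generators_W0_def by auto
  have GP: "finite W \<and> subsp W \<and> card W = q ^ (n+1) \<and> W \<subseteq> vecs n"
    unfolding q_def by (rule gen_props[OF sd])
  then have finW: "finite W" and subW: "subsp W" and cW: "card W = q ^ (n+1)" and Wv: "W \<subseteq> vecs n"
    by auto
  define J0 :: "nat set" where "J0 = {2..n+1}"
  have supW: "\<forall>x\<in>W. suppd n J0 x"
  proof
    fix x assume "x \<in> W"
    then have "x \<in> vecs n" using Wv by auto
    then show "suppd n J0 x" unfolding suppd_def J0_def suppJ0 vecs_def by auto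
  qed
  have isoW: "\<forall>x\<in>W. \<forall>y\<in>W. Bj n J0 x y = 0" using isoB unfolding J0_def B0_Bj by simp
  have a2: "2 \<in> J0" "J0 \<subseteq> {2..n+1}" using n2 unfolding J0_def by auto
  define S1 where "S1 = (\<lambda>x. x(2:=0)) ` {x\<in>W. x (2*n+3-2) = 0}"
  have R1: "finite S1 \<and> subsp S1 \<and> (\<forall>y\<in>S1. suppd n (J0-{2}) y) \<and> (\<forall>y\<in>S1. \<forall>z\<in>S1. Bj n (J0-{2}) y z = 0)
     \<and> (\<forall>y\<in>S1. \<exists>x\<in>W. x (2*n+3-2) = 0 \<and> y = x(2:=0)) \<and> card W \<le> q * card S1"
    unfolding S1_def q_def by (rule Red[OF a2 finW subW supW isoW])
  define J1 where "J1 = J0 - {2}"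
  have a3: "3 \<in> J1" "J1 \<subseteq> {2..n+1}" using n2 unfolding J1_def J0_def by auto
  have R1f: "finite S1" "subsp S1" "\<forall>y\<in>S1. suppd n J1 y" "\<forall>y\<in>S1. \<forall>z\<in>S1. Bj n J1 y z = 0"
    using R1 unfolding J1_def by auto
  define S2 where "S2 = (\<lambda>x. x(3:=0)) ` {x\<in>S1. x (2*n+3-3) = 0}"
  have R2: "finite S2 \<and> subsp S2 \<and> (\<forall>y\<in>S2. suppd n (J1-{3}) y) \<and> (\<forall>y\<in>S2. \<forall>z\<in>S2. Bj n (J1-{3}) y z = 0)
     \<and> (\<forall>y\<in>S2. \<exists>x\<in>S1. x (2*n+3-3) = 0 \<and> y = x(3:=0)) \<and> card S1 \<le> q * card S2"
    unfolding S2_def q_def by (rule Red[OF a3 R1f])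
  define J2 where "J2 = J1 - {3}"
  have J2e: "J2 = {4..n+1}" unfolding J2_def J1_def J0_def by auto
  have cJ2: "card J2 = n - 2" unfolding J2e by simp
  have ex: "\<exists>y\<in>S2. Qj n \<delta> J2 y \<noteq> 0"
  proof (rule ccontr)
    assume "\<not> (\<exists>y\<in>S2. Qj n \<delta> J2 y \<noteq> 0)"
    then have Q0: "\<forall>y\<in>S2. Qj n \<delta> J2 y = 0" by auto
    have fS2: "finite S2" "subsp S2" "\<forall>y\<in>S2. suppd n J2 y" using R2 unfolding J2_def by auto
    have "card S2 \<le> q ^ card J2" unfolding q_def
      by (rule EB[OF irr two]) (use fS2 Q0 J2e in auto)
    then have "card S2 \<le> q ^ (n-2)" using cJ2 by simp
    then have "card W \<le> q * (q * q ^ (n-2))" using R1 R2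
      by (meson le_trans mult_le_mono2)
    also have "q * (q * q ^ (n-2)) = q ^ n"
    proof -
      have "n = Suc (Suc (n-2))" using n2 by simp
      then have "q ^ n = q ^ Suc (Suc (n-2))" by metis
      then show ?thesis by simp
    qed
    finally have "q ^ (n+1) \<le> q ^ n" using cW by simp
    moreover have "q ^ n < q ^ (n+1)" using q2 by (intro power_strict_increasing) auto
    ultimately show False by simp
  qed
  then obtain y where y: "y \<in> S2" "Qj n \<delta> J2 y \<noteq> 0" by blast
  then obtain x' where x': "x' \<in> S1" "x' (2*n) = 0" "y = x'(3:=0)" using R2 by auto
  then obtain w0 where w0': "w0 \<in> W" "w0 (2*n+1) = 0" "x' = w0(2:=0)" using R1 by auto
  have "Qj n \<delta> J2 y = Qj n \<delta> J1 x'"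
    using Qrem[of 3 J1 n x' \<delta>, OF a3] x' unfolding J2_def by simp
  also have "\<dots> = Qj n \<delta> J0 w0"
    using Qrem[of 2 J0 n w0 \<delta>, OF a2] w0' unfolding J1_def by simp
  finally have cw0: "Qj n \<delta> J0 w0 \<noteq> 0" using y by simp
  have w2n: "w0 (2*n) = 0" using x' w0' n2 by simp
  define c where "c = Qj n \<delta> J0 w0"
  have c0: "c \<noteq> 0" using cw0 unfolding c_def .
  have sadd: "\<And>x y. x \<in> W \<Longrightarrow> y \<in> W \<Longrightarrow> (\<lambda>i. x i + y i) \<in> W"
    and smul: "\<And>c x. x \<in> W \<Longrightarrow> (\<lambda>i. c * x i) \<in> W" using subW unfolding subsp_def by auto
  have KEY: "Qform n \<delta> \<mu> (\<lambda>i. x i + t * w0 i) = Qform n \<delta> \<mu> x + t^2 * c" if x: "x \<in> W" for x t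
  proof -
    have tw: "(\<lambda>i. t * w0 i) \<in> W" using smul w0'(1) by blast
    have "Qj n \<delta> J0 (\<lambda>i. x i + t * w0 i) = Qj n \<delta> J0 x + Qj n \<delta> J0 (\<lambda>i. t * w0 i) + Bj n J0 x (\<lambda>i. t * w0 i)"
      using polar[OF two, of n \<delta> J0 x "\<lambda>i. t * w0 i"] by simp
    also have "\<dots> = Qj n \<delta> J0 x + t^2 * c" using isoW x tw hom[of n \<delta> J0 t w0] unfolding c_def by simp
    finally have e: "Qj n \<delta> J0 (\<lambda>i. x i + t * w0 i) = Qj n \<delta> J0 x + t^2 * c" .
    show ?thesis unfolding Qform_split[of n \<delta> \<mu>] J0_def[symmetric] e using w2n w0'(2) by simp
  qed
  define Z where "Z = {x\<in>W. Qform n \<delta> \<mu> x = 0}"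
  define f where "f = (\<lambda>(z,t). (\<lambda>i. z i + t * w0 i))"
  have bij: "bij_betw f (Z \<times> (UNIV::'a set)) W"
    unfolding bij_betw_def
  proof
    show "inj_on f (Z \<times> UNIV)"
    proof (rule inj_onI)
      fix p p' assume pp: "p \<in> Z \<times> UNIV" "p' \<in> Z \<times> UNIV" "f p = f p'"
      obtain z t z' t' where p: "p = (z,t)" "p' = (z',t')" by (cases p, cases p') auto
      have z: "z \<in> W" "Qform n \<delta> \<mu> z = 0" "z' \<in> W" "Qform n \<delta> \<mu> z' = 0" using pp p unfolding Z_def by auto
      have E: "z i + t * w0 i = z' i + t' * w0 i" for i using fun_cong[OF pp(3), of i] p unfolding f_def by simp
      have z'e: "z' = (\<lambda>i. z i + (t - t') * w0 i)"
      proof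
        fix i show "z' i = z i + (t - t') * w0 i" using E[of i] by (simp add: algebra_simps)
      qed
      have "Qform n \<delta> \<mu> z' = Qform n \<delta> \<mu> z + (t - t')^2 * c" unfolding z'e by (rule KEY[OF z(1)])
      then have "(t - t')^2 * c = 0" using z by simp
      then have "t = t'" using c0 by simp
      then show "p = p'" using z'e p by simp
    qed
  next
    show "f ` (Z \<times> UNIV) = W"
    proof
      show "f ` (Z \<times> UNIV) \<subseteq> W"
      proof
        fix x assume "x \<in> f ` (Z \<times> UNIV)"
        then obtain z t where "z \<in> Z" "x = (\<lambda>i. z i + t * w0 i)" unfolding f_def by auto
        then show "x \<in> W" using sadd smul w0'(1) unfolding Z_def by auto
      qed
      show "W \<subseteq> f ` (Z \<times> UNIV)"
      proof
        fix x assume x: "x \<in> W"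
        obtain s where s: "s^2 = Qform n \<delta> \<mu> x / c" using sq_surj[OF two] by blast
        define z where "z = (\<lambda>i. x i + s * w0 i)"
        have zW: "z \<in> W" unfolding z_def using sadd smul w0'(1) x by auto
        have "Qform n \<delta> \<mu> z = Qform n \<delta> \<mu> x + Qform n \<delta> \<mu> x"
          unfolding z_def KEY[OF x] s using c0 by simp
        also have "\<dots> = 0" by (rule two_add[OF two])
        finally have "z \<in> Z" using zW unfolding Z_def by simp
        moreover have "x = f (z, s)"
        proof
          fix i
          have "s * w0 i + s * w0 i = 0" by (rule two_add[OF two])
          then show "x i = f (z, s) i" unfolding f_def z_def by (simp add: add.assoc)
        qed
        ultimately show "x \<in> f ` (Z \<times> UNIV)" by blast
      qed
    qed
  qed
  have "card W = card (Z \<times> (UNIV::'a set))" using bij_betw_same_card[OF bij] by simp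
  also have "\<dots> = card Z * q" unfolding q_def by (simp add: card_cartesian_product)
  finally have cWZ: "card W = card Z * q" .
  have "q ^ (n+1) = q ^ n * q" by (simp add: mult.commute)
  then have "card Z * q = q ^ n * q" using cW cWZ by metis
  moreover have "q \<noteq> 0" using q2 by simp
  ultimately have "card Z = q ^ n" by simp
  then show ?thesis using finW subW Wv unfolding Z_def q_def by simp
qed

theorem mainTheorem6:
  fixes \<delta> \<mu> :: "'a::{field,finite}" and n :: nat
  assumes "CHAR('a) = 2"
    and "n \<ge> 2"
    and "irreducible [:\<delta>, 1, 1:]"
    and "\<mu> \<noteq> 0"
  shows "m_ovoid_W0 n ((card (UNIV :: 'a set) ^ n - 1) div (card (UNIV :: 'a set) - 1)) (quadric n \<delta> \<mu>)"
  unfolding m_ovoid_W0_def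
proof
  show "quadric n \<delta> \<mu> \<subseteq> proj_points n" unfolding quadric_def by auto
  show "\<forall>W\<in>generators_W0 n. card {P \<in> quadric n \<delta> \<mu>. P \<subseteq> W} = (card (UNIV::'a set) ^ n - 1) div (card (UNIV::'a set) - 1)"
  proof
    fix W :: "(nat \<Rightarrow> 'a) set" assume W: "W \<in> generators_W0 n"
    have C: "card {x\<in>W. Qform n \<delta> \<mu> x = 0} = card (UNIV::'a set) ^ n \<and> finite W \<and> subsp W \<and> W \<subseteq> vecs n"
      by (rule count_main[OF assms(1,2,3) W])
    show "card {P \<in> quadric n \<delta> \<mu>. P \<subseteq> W} = (card (UNIV::'a set) ^ n - 1) div (card (UNIV::'a set) - 1)"
      using count_points[of W n \<delta> \<mu>] C by blast
  qed
qed

end
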